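(* Let $n\ge 1$ and let $x:\mathbb{N}\to\mathbb{R}$ satisfy $x(t+n)=a_1x(t+n-1)+\dots+a_nx(t)$ for all $t\in\mathbb{N}$, with $a_1,\dots,a_n\in\mathbb{R}$. Assume that $x$ satisfies no linear difference equation of order strictly less than $n$, i.e. there is no integer $m<n$ and no $c_1,\dots,c_m\in\mathbb{R}$ with $x(t+m)=c_1x(t+m-1)+\dots+c_mx(t)$ for all $t\in\mathbb{N}$. Let $X\in\mathbb{R}(z)$ be the rational function whose expansion at infinity is $\sum_{t\ge0}x(t)z^{-(t+1)}$, let $Q(z)=z^n-a_1z^{n-1}-\dots-a_n$, and let $P=QX$, which is a polynomial $P(z)=b_0z^{n-1}+b_1z^{n-2}+\dots+b_{n-1}$ with $b_0,\dots,b_{n-1}\in\mathbb{R}$. Then the parameters $a_1,\dots,a_n,b_0,\dots,b_{n-1}$ are linearly identifiable: the $(2n+1)\times(2n+1)$ Wronskian matrix $\mathcal{M}$ whose $\chi$-th row ($0\le\chi\le 2n$) is $$\Big(\tfrac{d^\chi}{dz^\chi}(z^nX),\ \tfrac{d^\chi}{dz^\chi}(z^{n-1}X),\ \dots,\ \tfrac{d^\chi}{dz^\chi}X,\ \tfrac{d^\chi}{dz^\chi}z^{n-1},\ \dots,\ \tfrac{d^\chi}{dz^\chi}z,\ \tfrac{d^\chi}{dz^\chi}1\Big)$$ has rank $2n$, and $(\alpha_1,\dots,\alpha_n,\beta_0,\dots,\beta_{n-1})=(a_1,\dots,a_n,b_0,\dots,b_{n-1})$ is the unique solution in $\mathbb{R}(z)^{2n}$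 of the linear system $$\frac{d^\chi}{dz^\chi}(z^nX)=\sum_{i=1}^n\alpha_i\frac{d^\chi}{dz^\chi}(z^{n-i}X)+\sum_{j=0}^{n-1}\beta_j\frac{d^\chi}{dz^\chi}z^{n-1-j},\qquad \chi=0,1,\dots,2n.$$
   Context: $\mathbb{R}(z)$ is the field of real rational functions, viewed as a differential field with derivation $d/dz$ (its field of constants is $\mathbb{R}$). The rational function $X$ exists because $x$ satisfies a linear recurrence. *)

theory Defs
  imports Complex_Main "HOL-Computational_Algebra.Polynomial" "HOL-Computational_Algebra.Fraction_Field"
    "Jordan_Normal_Form.DL_Rank"
begin

text \<open>The field of real rational functions R(z) is modelled as real poly fract.
  A polynomial is embedded as a constant fraction.\<close>

definition rf_of_poly :: "real poly \<Rightarrow> real poly fract" where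
  "rf_of_poly p = Fract p 1"

definition rf_const :: "real \<Rightarrow> real poly fract" where
  "rf_const c = rf_of_poly [:c:]"

definition rf_deriv :: "real poly fract \<Rightarrow> real poly fract" where
  "rf_deriv r = (let (p, q) = (SOME (p, q). q \<noteq> 0 \<and> r = Fract p q)
                 in Fract (pderiv p * q - p * pderiv q) (q * q))"

definition rf_deriv_n :: "nat \<Rightarrow> real poly fract \<Rightarrow> real poly fract" where
  "rf_deriv_n k = rf_deriv ^^ k"

definition rf_z_pow :: "nat \<Rightarrow> real poly fract" where
  "rf_z_pow k = rf_of_poly (monom 1 k)"

end

theory Submission imports Defs "HOL-Computational_Algebra.Polynomial_Factorial" "HOL-Computational_Algebra.Field_as_Ring"
  "HOL-Computational_Algebra.Formal_Laurent_Series"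
begin

lemma rfd_wd:
  fixes p q p1 q1 :: "real poly"
  assumes "q \<noteq> 0" "q1 \<noteq> 0" "p * q1 = p1 * q"
  shows "Fract (pderiv p * q - p * pderiv q) (q*q) = Fract (pderiv p1 * q1 - p1 * pderiv q1) (q1*q1)"
proof -
  have d: "pderiv p * q1 + p * pderiv q1 = pderiv p1 * q + p1 * pderiv q"
    using arg_cong[OF assms(3), of pderiv] by (simp add: pderiv_mult algebra_simps)
  have "(pderiv p * q - p * pderiv q) * (q1 * q1) = (pderiv p1 * q1 - p1 * pderiv q1) * (q * q)"
  proof -
    have "(pderiv p * q - p * pderiv q) * (q1 * q1) = q*q1*(pderiv p * q1) - pderiv q * q1 * (p*q1)"
      by (simp add: algebra_simps)
    also have "\<dots> = q*q1*(pderiv p1 * q + p1 * pderiv q - p * pderiv q1) - pderiv q * q1 * (p1*q)"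
    proof -
      have d': "pderiv p * q1 = pderiv p1 * q + p1 * pderiv q - p * pderiv q1"
        using d by (simp add: algebra_simps)
      show ?thesis by (simp only: d' assms(3))
    qed
    also have "\<dots> = q*q*q1*pderiv p1 - q * pderiv q1 * (p * q1)"
      by (simp add: algebra_simps)
    also have "\<dots> = q*q*q1*pderiv p1 - q * pderiv q1 * (p1 * q)"
      using assms(3) by simp
    finally show ?thesis by (simp add: algebra_simps)
  qed
  then show ?thesis using assms by (simp add: eq_fract)
qed

lemma rf_deriv_Fract:
  fixes p q :: "real poly"
  assumes "q \<noteq> 0"
  shows "rf_deriv (Fract p q) = Fract (pderiv p * q - p * pderiv q) (q*q)"
proof -
  define pq where "pq = (SOME (p1, q1). q1 \<noteq> 0 \<and> Fract p q = Fract p1 q1)"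
  have ex: "\<exists>pq. (\<lambda>(p1, q1). q1 \<noteq> 0 \<and> Fract p q = Fract p1 q1) pq"
    using assms by auto
  have "(\<lambda>(p1, q1). q1 \<noteq> 0 \<and> Fract p q = Fract p1 q1) pq"
    unfolding pq_def by (rule someI_ex[OF ex])
  then obtain p1 q1 where pq: "pq = (p1, q1)" "q1 \<noteq> 0" "Fract p q = Fract p1 q1"
    by (cases pq) auto
  have e: "p * q1 = p1 * q" using pq(2,3) assms by (simp add: eq_fract)
  show ?thesis unfolding rf_deriv_def pq_def[symmetric] pq(1)
    using rfd_wd[OF pq(2) assms e[symmetric]] by simp
qed

lemma rf_deriv_add: "rf_deriv (r + s) = rf_deriv r + rf_deriv s"
proof (cases r, cases s)
  fix a b c d :: "real poly"
  assume r: "r = Fract a b" "b \<noteq> 0" and s: "s = Fract c d" "d \<noteq> 0"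
  show ?thesis using r s
    by (simp add: rf_deriv_Fract eq_fract pderiv_mult pderiv_add algebra_simps)
qed

lemma rf_deriv_mult: "rf_deriv (r * s) = rf_deriv r * s + r * rf_deriv s"
proof (cases r, cases s)
  fix a b c d :: "real poly"
  assume r: "r = Fract a b" "b \<noteq> 0" and s: "s = Fract c d" "d \<noteq> 0"
  show ?thesis using r s
    by (simp add: rf_deriv_Fract eq_fract pderiv_mult pderiv_add algebra_simps)
qed

lemma rf_deriv_const [simp]: "rf_deriv (rf_const c) = 0"
  by (simp add: rf_const_def rf_of_poly_def rf_deriv_Fract fract_collapse)

lemma rf_deriv_0 [simp]: "rf_deriv 0 = 0"
  using rf_deriv_const[of 0] by (simp add: rf_const_def rf_of_poly_def fract_collapse)

lemma rf_deriv_1 [simp]: "rf_deriv 1 = 0"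
  using rf_deriv_const[of 1] by (simp add: rf_const_def rf_of_poly_def fract_collapse one_pCons[symmetric])

lemma rf_deriv_uminus: "rf_deriv (- r) = - rf_deriv r"
  using rf_deriv_add[of r "-r"] by (simp add: eq_neg_iff_add_eq_0)

lemma rf_deriv_diff: "rf_deriv (r - s) = rf_deriv r - rf_deriv s"
  using rf_deriv_add[of r "-s"] rf_deriv_uminus[of s] by simp

lemma rf_deriv_sum: "rf_deriv (\<Sum>i\<in>A. f i) = (\<Sum>i\<in>A. rf_deriv (f i))"
  by (induction A rule: infinite_finite_induct) (auto simp: rf_deriv_add)

lemma pderiv_zero_dvd:
  fixes p :: "real poly"
  assumes "p dvd pderiv p" shows "pderiv p = 0"
proof (rule ccontr)
  assume h: "pderiv p \<noteq> 0"
  then have "degree p \<le> degree (pderiv p)" using dvd_imp_degree_le assms by blast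
  moreover have "degree p \<noteq> 0" using h pderiv_eq_0_iff by blast
  ultimately show False by (simp add: degree_pderiv)
qed

lemma rf_deriv_zero_const:
  assumes "rf_deriv r = 0" shows "\<exists>c. r = rf_const c"
proof (cases r)
  case (Fract p q)
  have "gcd p q \<noteq> 0" using Fract(2) by simp
  then obtain p1 q1 where pq: "p = p1 * gcd p q" "q = q1 * gcd p q" "coprime p1 q1"
    using gcd_coprime_exists by blast
  define g where "g = gcd p q"
  have g0: "g \<noteq> 0" using Fract(2) g_def by simp
  have q10: "q1 \<noteq> 0" using Fract(2) pq by auto
  have "pderiv p * q - p * pderiv q = 0"
    using assms Fract by (simp add: rf_deriv_Fract eq_fract Zero_fract_def)
  then have "g * g * (pderiv p1 * q1 - p1 * pderiv q1) = 0"
    unfolding g_def by (subst (asm) pq(1), subst (asm) pq(2), subst (asm) pq(1), subst (asm) pq(2))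
      (simp add: pderiv_mult algebra_simps)
  then have e: "pderiv p1 * q1 = p1 * pderiv q1" using g0 by simp
  have "p1 dvd pderiv p1 * q1" unfolding e by simp
  then have "p1 dvd pderiv p1" using pq(3) coprime_dvd_mult_left_iff by blast
  then have dp: "pderiv p1 = 0" by (rule pderiv_zero_dvd)
  have "q1 dvd p1 * pderiv q1" unfolding e[symmetric] by simp
  then have "q1 dvd pderiv q1" using pq(3) coprime_dvd_mult_right_iff[of q1 p1] coprime_commute by blast
  then have dq: "pderiv q1 = 0" by (rule pderiv_zero_dvd)
  obtain c1 where c1: "p1 = [:c1:]" using pderiv_iszero[OF dp] by blast
  obtain d1 where d1: "q1 = [:d1:]" using pderiv_iszero[OF dq] by blast
  have d10: "d1 \<noteq> 0" using q10 d1 by simp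
  have "r = Fract p1 q1" using Fract(1) pq(1,2) g0
    by (metis g_def mult.commute mult_fract_cancel)
  also have "\<dots> = rf_const (c1 / d1)"
    unfolding rf_const_def rf_of_poly_def c1 d1 using d10
    by (simp add: eq_fract)
  finally show ?thesis by blast
qed

lemma wronski:
  fixes D :: "'a::field \<Rightarrow> 'a" and f :: "nat \<Rightarrow> 'a"
  assumes Dadd: "\<And>x y. D (x+y) = D x + D y"
    and Dmult: "\<And>x y. D (x*y) = D x * y + x * D y"
  shows "finite I \<Longrightarrow> (\<forall>\<chi> < card I. (\<Sum>i\<in>I. \<gamma> i * (D^^\<chi>) (f i)) = 0) \<Longrightarrow> (\<exists>i\<in>I. \<gamma> i \<noteq> 0)
     \<Longrightarrow> \<exists>c. (\<forall>i\<in>I. D (c i) = 0) \<and> (\<exists>i\<in>I. c i \<noteq> 0) \<and> (\<Sum>i\<in>I. c i * f i) = 0"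
proof (induction "card I" arbitrary: I \<gamma> rule: less_induct)
  case less
  have D0: "D 0 = 0"
  proof -
    have "D 0 + D 0 = D 0 + 0" using Dadd[of 0 0] by simp
    then show ?thesis by (metis add_left_cancel)
  qed
  have D1: "D 1 = 0"
  proof -
    have "D 1 + D 1 = D 1 + 0" using Dmult[of 1 1] by simp
    then show ?thesis by (metis add_left_cancel)
  qed
  have Dsum: "\<And>g (A::nat set). D (\<Sum>i\<in>A. g i) = (\<Sum>i\<in>A. D (g i))"
  proof -
    fix g and A :: "nat set"
    show "D (\<Sum>i\<in>A. g i) = (\<Sum>i\<in>A. D (g i))"
      by (induction A rule: infinite_finite_induct) (auto simp: Dadd D0)
  qed
  obtain j where j: "j \<in> I" "\<gamma> j \<noteq> 0" using less.prems by blast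
  define g where "g i = \<gamma> i / \<gamma> j" for i
  have G: "(\<Sum>i\<in>I. g i * (D^^\<chi>) (f i)) = 0" if "\<chi> < card I" for \<chi>
  proof -
    have "(\<Sum>i\<in>I. g i * (D^^\<chi>) (f i)) = (\<Sum>i\<in>I. \<gamma> i * (D^^\<chi>) (f i)) / \<gamma> j"
      unfolding g_def by (simp add: sum_divide_distrib)
    then show ?thesis using less.prems(2) that by simp
  qed
  define \<delta> where "\<delta> i = D (g i)" for i
  have Dl: "(\<Sum>i\<in>I. \<delta> i * (D^^\<chi>) (f i)) = 0" if "\<chi> < card I - 1" for \<chi>
  proof -
    have "0 = D (\<Sum>i\<in>I. g i * (D^^\<chi>) (f i))" using G[of \<chi>] that D0 by simp
    also have "\<dots> = (\<Sum>i\<in>I. \<delta> i * (D^^\<chi>) (f i)) + (\<Sum>i\<in>I. g i * (D^^Suc \<chi>) (f i))"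
      by (simp add: Dsum Dmult \<delta>_def sum.distrib)
    also have "(\<Sum>i\<in>I. g i * (D^^Suc \<chi>) (f i)) = 0" using G[of "Suc \<chi>"] that by simp
    finally show ?thesis by simp
  qed
  have dj: "\<delta> j = 0" unfolding \<delta>_def g_def using j D1 by simp
  have cI: "card I > 0" using j less.prems(1) card_gt_0_iff by blast
  show ?case
  proof (cases "\<exists>i\<in>I - {j}. \<delta> i \<noteq> 0")
    case True
    have cI': "card (I - {j}) = card I - 1" using j less.prems(1) by simp
    have R: "\<forall>\<chi> < card (I - {j}). (\<Sum>i\<in>I - {j}. \<delta> i * (D^^\<chi>) (f i)) = 0"
    proof (intro allI impI)
      fix \<chi> assume "\<chi> < card (I - {j})"
      then have "(\<Sum>i\<in>I. \<delta> i * (D^^\<chi>) (f i)) = 0" using Dl cI' by simp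
      then show "(\<Sum>i\<in>I - {j}. \<delta> i * (D^^\<chi>) (f i)) = 0"
        using sum.remove[OF less.prems(1) j(1), of "\<lambda>i. \<delta> i * (D^^\<chi>) (f i)"] dj by simp
    qed
    obtain c where c: "\<forall>i\<in>I - {j}. D (c i) = 0" "\<exists>i\<in>I - {j}. c i \<noteq> 0" "(\<Sum>i\<in>I - {j}. c i * f i) = 0"
      using less.hyps[of "I - {j}" \<delta>] cI' cI less.prems(1) R True by auto
    show ?thesis
    proof (intro exI[of _ "c(j := 0)"] conjI)
      show "\<forall>i\<in>I. D ((c(j := 0)) i) = 0" using c(1) D0 by auto
      show "\<exists>i\<in>I. (c(j := 0)) i \<noteq> 0" using c(2) by auto
      have "(\<Sum>i\<in>I. (c(j := 0)) i * f i) = (\<Sum>i\<in>I - {j}. (c(j := 0)) i * f i)"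
        using sum.remove[OF less.prems(1) j(1), of "\<lambda>i. (c(j := 0)) i * f i"] by simp
      also have "\<dots> = (\<Sum>i\<in>I - {j}. c i * f i)" by (rule sum.cong) auto
      finally show "(\<Sum>i\<in>I. (c(j := 0)) i * f i) = 0" using c(3) by simp
    qed
  next
    case False
    then have "\<forall>i\<in>I. D (g i) = 0" using dj unfolding \<delta>_def by auto
    moreover have "g j \<noteq> 0" using j unfolding g_def by simp
    moreover have "(\<Sum>i\<in>I. g i * f i) = 0" using G[of 0] cI by simp
    ultimately show ?thesis using j by blast
  qed
qed

definition psi :: "real poly \<Rightarrow> real fls" where
  "psi C = poly (map_poly fls_const C) fls_X_inv"

definition Sx :: "(nat \<Rightarrow> real) \<Rightarrow> real fls" where
  "Sx x = Abs_fls (\<lambda>i. if i \<ge> 1 then x (nat (i - 1)) else 0)"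

lemma Sx_nth: "fls_nth (Sx x) i = (if i \<ge> 1 then x (nat (i - 1)) else 0)"
  unfolding Sx_def by (rule nth_Abs_fls_lower_bound[of 0]) auto

lemma fls_const_sum: "fls_const (\<Sum>i\<in>A. f i) = (\<Sum>i\<in>A. fls_const (f i))"
  by (induction A rule: infinite_finite_induct) (auto simp: fls_plus_const[symmetric])

lemma map_fls_add: "map_poly fls_const (p + q) = map_poly fls_const p + map_poly fls_const (q :: real poly)"
  by (intro poly_eqI) (simp add: coeff_map_poly fls_plus_const)

lemma map_fls_mult: "map_poly fls_const (p * q) = map_poly fls_const p * map_poly fls_const (q :: real poly)"
  by (intro poly_eqI) (simp add: coeff_map_poly coeff_mult fls_const_sum)

lemma psi_add: "psi (p + q) = psi p + psi q"
  by (simp add: psi_def map_fls_add)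

lemma psi_mult: "psi (p * q) = psi p * psi q"
  by (simp add: psi_def map_fls_mult)

lemma psi_altdef: "psi C = (\<Sum>k\<le>N. fls_const (coeff C k) * fls_X_inv ^ k)" if "degree C \<le> N"
proof -
  have "psi C = (\<Sum>k\<le>degree (map_poly fls_const C). coeff (map_poly fls_const C) k * fls_X_inv ^ k)"
    unfolding psi_def by (rule poly_altdef)
  also have "\<dots> = (\<Sum>k\<le>degree C. fls_const (coeff C k) * fls_X_inv ^ k)"
    by (simp add: coeff_map_poly degree_map_poly)
  also have "\<dots> = (\<Sum>k\<le>N. fls_const (coeff C k) * fls_X_inv ^ k)"
  proof (rule sum.mono_neutral_left)
    show "\<forall>i\<in>{..N} - {..degree C}. fls_const (coeff C i) * fls_X_inv ^ i = 0"
      by (auto simp: coeff_eq_0)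
  qed (use that in auto)
  finally show ?thesis .
qed

lemma psi_nth: "fls_nth (psi C) i = (if i \<le> 0 then coeff C (nat (-i)) else 0)"
proof -
  have "fls_nth (psi C) i = (\<Sum>k\<le>degree C. coeff C k * (if i = - int k then 1 else 0))"
    by (simp add: psi_altdef[OF order.refl] fls_nth_sum)
  also have "\<dots> = (\<Sum>k\<le>degree C. if k = nat (-i) \<and> i \<le> 0 then coeff C k else 0)"
    by (rule sum.cong) auto
  also have "\<dots> = (if i \<le> 0 then coeff C (nat (-i)) else 0)"
    by (auto simp: coeff_eq_0 sum.delta)
  finally show ?thesis .
qed

lemma psi_S_nth:
  assumes "degree C \<le> N"
  shows "fls_nth (psi C * F) i = (\<Sum>k\<le>N. coeff C k * fls_nth F (i + int k))"
proof -
  have "psi C * F = (\<Sum>k\<le>N. fls_const (coeff C k) * (fls_X_inv ^ k * F))"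
    by (simp add: psi_altdef[OF assms] sum_distrib_right mult.assoc)
  then show ?thesis by (simp add: fls_nth_sum fls_X_inv_power_times_conv_shift)
qed

lemma psi_eq_0_iff: "psi C = 0 \<longleftrightarrow> C = 0"
proof
  assume "psi C = 0"
  then have "\<forall>m. coeff C m = 0" using psi_nth[of C "- int _"]
    by (metis fls_zero_nth nat_int neg_0_le_iff_le of_nat_0_le_iff minus_minus)
  then show "C = 0" by (simp add: poly_eqI)
qed (simp add: psi_def)

lemma poly_altdef_N: "poly C (z::real) = (\<Sum>k\<le>N. coeff C k * z ^ k)" if "degree C \<le> N"
proof -
  have "poly C z = (\<Sum>k\<le>degree C. coeff C k * z ^ k)" by (rule poly_altdef)
  also have "\<dots> = (\<Sum>k\<le>N. coeff C k * z ^ k)"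
    by (rule sum.mono_neutral_left) (use that in \<open>auto simp: coeff_eq_0\<close>)
  finally show ?thesis .
qed

lemma finite_avoid: "finite (A :: real set) \<Longrightarrow> \<exists>z. z > R \<and> z \<notin> A"
proof -
  assume "finite A"
  define z where "z = Max (insert R A) + 1"
  have "\<forall>y\<in>insert R A. y \<le> Max (insert R A)" using \<open>finite A\<close> by simp
  then have "z > R" "z \<notin> A" unfolding z_def by force+
  then show ?thesis by blast
qed

lemma analytic_identity:
  fixes Q pX qX P :: "real poly" and x :: "nat \<Rightarrow> real" and N :: nat
  assumes degQ: "degree Q \<le> N"
    and rec: "\<And>t. (\<Sum>k\<le>N. coeff Q k * x (t+k)) = 0"
    and expn: "\<exists>R. \<forall>z :: real. \<bar>z\<bar> > R \<longrightarrow> (\<lambda>t. x t / z ^ (t + 1)) sums (poly pX z / poly qX z)"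
    and qX: "qX \<noteq> 0"
    and Pz: "\<And>z. poly P z = (\<Sum>k\<le>N. coeff Q k * (\<Sum>t<k. x t * z ^ (k - t - 1)))"
  shows "Q * pX = P * qX"
proof -
  obtain R where R: "\<And>z :: real. \<bar>z\<bar> > R \<Longrightarrow> (\<lambda>t. x t / z ^ (t + 1)) sums (poly pX z / poly qX z)"
    using expn by blast
  have key: "poly (Q * pX - P * qX) z = 0" if z: "z > max R 0" "poly qX z \<noteq> 0" for z
  proof -
    define s where "s = poly pX z / poly qX z"
    have z0: "z \<noteq> 0" using z by simp
    have S: "(\<lambda>t. x t / z ^ (t + 1)) sums s" unfolding s_def using R z by auto
    have Sk: "(\<lambda>t. coeff Q k * (x (t+k) / z ^ (t + 1))) sums
               (coeff Q k * (z ^ k * s - (\<Sum>t<k. x t * z ^ (k - t - 1))))" for k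
    proof -
      have "(\<lambda>t. z^k * (x t / z ^ (t + 1))) sums (z^k * s)" by (rule sums_mult[OF S])
      then have "(\<lambda>t. z^k * (x (t+k) / z ^ (t + k + 1))) sums (z^k * s - (\<Sum>t<k. z^k * (x t / z ^ (t + 1))))"
        using sums_iff_shift[of "\<lambda>t. z^k * (x t / z ^ (t + 1))" k "z^k * s - (\<Sum>t<k. z^k * (x t / z ^ (t + 1)))"]
        by simp
      moreover have e1: "(\<lambda>t. z^k * (x (t+k) / z ^ (t + k + 1))) = (\<lambda>t. x (t+k) / z ^ (t + 1))"
        using z0 by (intro ext) (simp add: power_add field_simps)
      moreover have e2: "z^k * (x t / z ^ (t + 1)) = x t * z ^ (k - t - 1)" if "t < k" for t
      proof -
        have kk: "(k - t - 1) + (t+1) = k" using that by simp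
        have "z^((k - t - 1) + (t+1)) = z^(k - t - 1) * z^(t+1)" by (rule power_add)
        then have "z^k = z^(k - t - 1) * z^(t+1)" unfolding kk .
        then show ?thesis using z0 by (simp add: field_simps)
      qed
      moreover have "(\<Sum>t<k. z^k * (x t / z ^ (t + 1))) = (\<Sum>t<k. x t * z ^ (k - t - 1))"
        using e2 by (intro sum.cong refl) auto
      ultimately have "(\<lambda>t. x (t+k) / z ^ (t + 1)) sums (z^k * s - (\<Sum>t<k. x t * z ^ (k - t - 1)))"
        by simp
      then show ?thesis by (rule sums_mult)
    qed
    have "(\<lambda>t. \<Sum>k\<le>N. coeff Q k * (x (t+k) / z ^ (t + 1))) sums
           (\<Sum>k\<le>N. coeff Q k * (z ^ k * s - (\<Sum>t<k. x t * z ^ (k - t - 1))))"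
      by (rule sums_sum) (rule Sk)
    moreover have "(\<lambda>t. \<Sum>k\<le>N. coeff Q k * (x (t+k) / z ^ (t + 1))) = (\<lambda>t. 0)"
    proof (rule ext)
      fix t
      have "(\<Sum>k\<le>N. coeff Q k * (x (t+k) / z ^ (t + 1))) = (\<Sum>k\<le>N. coeff Q k * x (t+k)) / z ^ (t + 1)"
        by (simp add: sum_divide_distrib)
      then show "(\<Sum>k\<le>N. coeff Q k * (x (t+k) / z ^ (t + 1))) = 0" using rec by simp
    qed
    ultimately have "(\<lambda>t. 0::real) sums (\<Sum>k\<le>N. coeff Q k * (z ^ k * s - (\<Sum>t<k. x t * z ^ (k - t - 1))))"
      by simp
    then have "(\<Sum>k\<le>N. coeff Q k * (z ^ k * s - (\<Sum>t<k. x t * z ^ (k - t - 1)))) = 0"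
      using sums_unique2[OF _ sums_zero] by blast
    then have "poly Q z * s - poly P z = 0"
      by (simp add: poly_altdef_N[OF degQ] Pz right_diff_distrib sum_subtractf sum_distrib_right mult.assoc
                     mult.left_commute)
    then show ?thesis unfolding s_def using z(2) by (simp add: field_simps)
  qed
  show ?thesis
  proof (rule ccontr)
    assume ne: "Q * pX \<noteq> P * qX"
    then have "Q * pX - P * qX \<noteq> 0" by simp
    then have "finite ({z. poly (Q * pX - P * qX) z = 0} \<union> {z. poly qX z = 0})"
      using poly_roots_finite qX by blast
    then obtain z where "z > max R 0" "z \<notin> {z. poly (Q * pX - P * qX) z = 0} \<union> {z. poly qX z = 0}"
      using finite_avoid by blast
    then show False using key by auto
  qed
qed


lemma rf_of_poly_add: "rf_of_poly (p + q) = rf_of_poly p + rf_of_poly q"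
  by (simp add: rf_of_poly_def)
lemma rf_of_poly_mult: "rf_of_poly (p * q) = rf_of_poly p * rf_of_poly q"
  by (simp add: rf_of_poly_def)
lemma rf_of_poly_diff: "rf_of_poly (p - q) = rf_of_poly p - rf_of_poly q"
  by (simp add: rf_of_poly_def)
lemma rf_of_poly_0: "rf_of_poly 0 = 0"
  by (simp add: rf_of_poly_def fract_collapse)
lemma rf_of_poly_sum: "rf_of_poly (\<Sum>i\<in>A. f i) = (\<Sum>i\<in>A. rf_of_poly (f i))"
  by (induction A rule: infinite_finite_induct) (auto simp: rf_of_poly_add rf_of_poly_0)
lemma rf_of_poly_eq_0_iff: "rf_of_poly p = 0 \<longleftrightarrow> p = 0"
  by (simp add: rf_of_poly_def Zero_fract_def eq_fract)
lemma rf_of_poly_monom: "rf_of_poly (monom c k) = rf_const c * rf_z_pow k"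
  by (simp add: rf_of_poly_def rf_const_def rf_z_pow_def smult_monom)

lemma rf_deriv_n_Suc: "rf_deriv_n (Suc k) u = rf_deriv (rf_deriv_n k u)"
  by (simp add: rf_deriv_n_def)
lemma rf_deriv_n_add: "rf_deriv_n k (u + v) = rf_deriv_n k u + rf_deriv_n k v"
  by (induction k) (simp_all add: rf_deriv_n_Suc rf_deriv_add, simp add: rf_deriv_n_def)
lemma rf_deriv_n_0: "rf_deriv_n k 0 = 0"
  by (induction k) (simp_all add: rf_deriv_n_Suc, simp add: rf_deriv_n_def)
lemma rf_deriv_n_sum: "rf_deriv_n k (\<Sum>i\<in>A. f i) = (\<Sum>i\<in>A. rf_deriv_n k (f i))"
  by (induction A rule: infinite_finite_induct) (auto simp: rf_deriv_n_add rf_deriv_n_0)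
lemma rf_deriv_n_cmult: "rf_deriv_n k (rf_const c * u) = rf_const c * rf_deriv_n k u"
  by (induction k) (simp_all add: rf_deriv_n_Suc rf_deriv_mult, simp add: rf_deriv_n_def)

lemma sum_split_2n:
  "(\<Sum>k\<in>{1..2*n}. h k) = (\<Sum>i\<in>{1..n}. h i) + (\<Sum>j<n. h (j + Suc n))"
proof -
  have "{1..2*n} = {1..n} \<union> {Suc n..2*n}" by auto
  then have "(\<Sum>k\<in>{1..2*n}. h k) = (\<Sum>i\<in>{1..n}. h i) + (\<Sum>k\<in>{Suc n..2*n}. h k)"
    by (simp add: sum.union_disjoint)
  moreover have "(\<Sum>k\<in>{Suc n..2*n}. h k) = (\<Sum>j<n. h (j + Suc n))"
  proof -
    have "{Suc n..2*n} = (\<lambda>j. j + Suc n) ` {..<n}"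
    proof -
      have "k \<in> (\<lambda>j. j + Suc n) ` {..<n}" if "k \<in> {Suc n..2*n}" for k
      proof -
        have "k = (k - Suc n) + Suc n" "k - Suc n < n" using that by auto
        then show ?thesis by blast
      qed
      then show ?thesis by auto
    qed
    moreover have "inj_on (\<lambda>j. j + Suc n) {..<n}" by (simp add: inj_on_def)
    ultimately show ?thesis by (simp add: sum.reindex)
  qed
  ultimately show ?thesis by simp
qed

lemma sum_shift_1: "(\<Sum>k<m. g k) = (\<Sum>k\<in>{1..m}. g (k - 1))" for g :: "nat \<Rightarrow> 'a::comm_monoid_add"
  using sum.atLeast1_atMost_eq[of "\<lambda>k. g (k - 1)" m] by simp


lemma rf_const_1: "rf_const 1 = 1"
  by (simp add: rf_const_def rf_of_poly_def One_fract_def one_pCons)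
lemma rf_const_0: "rf_const 0 = 0"
  by (simp add: rf_const_def rf_of_poly_def fract_collapse)

theorem theorem1:
  fixes n :: nat and x :: "nat \<Rightarrow> real" and a :: "nat \<Rightarrow> real"
    and X :: "real poly fract" and pX qX :: "real poly"
  assumes n_pos: "n \<ge> 1"
    and recur: "\<forall>t. x (t + n) = (\<Sum>i = 1..n. a i * x (t + n - i))"
    and minimal: "\<not> (\<exists>m < n. \<exists>c :: nat \<Rightarrow> real. \<forall>t. x (t + m) = (\<Sum>i = 1..m. c i * x (t + m - i)))"
    and X_def: "X = Fract pX qX" and qX_nz: "qX \<noteq> 0"
    and X_expansion: "\<exists>R. \<forall>z :: real. \<bar>z\<bar> > R \<longrightarrow>
                        (\<lambda>t. x t / z ^ (t + 1)) sums (poly pX z / poly qX z)"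
  defines "Q \<equiv> monom 1 n - (\<Sum>i = 1..n. monom (a i) (n - i))"
  defines "M \<equiv> mat (2 * n + 1) (2 * n + 1) (\<lambda>(\<chi>, k).
                 if k \<le> n then rf_deriv_n \<chi> (rf_z_pow (n - k) * X)
                 else rf_deriv_n \<chi> (rf_z_pow (2 * n - k)))"
  shows "\<exists>b :: nat \<Rightarrow> real.
           rf_of_poly Q * X = rf_of_poly (\<Sum>j < n. monom (b j) (n - 1 - j))
         \<and> vec_space.rank (2 * n + 1) M = 2 * n
         \<and> (\<forall>(\<alpha> :: nat \<Rightarrow> real poly fract) (\<beta> :: nat \<Rightarrow> real poly fract).
              (\<forall>\<chi> \<le> 2 * n.
                 rf_deriv_n \<chi> (rf_z_pow n * X)
                 = (\<Sum>i = 1..n. \<alpha> i * rf_deriv_n \<chi> (rf_z_pow (n - i) * X))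
                   + (\<Sum>j < n. \<beta> j * rf_deriv_n \<chi> (rf_z_pow (n - 1 - j))))
              \<longleftrightarrow> ((\<forall>i \<in> {1..n}. \<alpha> i = rf_const (a i)) \<and> (\<forall>j < n. \<beta> j = rf_const (b j))))"
proof -
  define F where "F k = (if k \<le> n then rf_z_pow (n - k) * X else rf_z_pow (2*n - k))" for k
  have coeffQ: "coeff Q k = (if k = n then 1 else 0) - (\<Sum>i=1..n. if n - i = k then a i else 0)" for k
    unfolding Q_def by (simp add: coeff_diff coeff_sum coeff_monom)
  have sumQ: "(\<Sum>k\<le>n. coeff Q k * y k) = y n - (\<Sum>i=1..n. a i * y (n - i))" for y :: "nat \<Rightarrow> real"
  proof -
    have "(\<Sum>k\<le>n. coeff Q k * y k) = (\<Sum>k\<le>n. (if k = n then y k else 0)) -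
            (\<Sum>k\<le>n. \<Sum>i=1..n. if k = n - i then a i * y k else 0)"
      unfolding coeffQ left_diff_distrib sum_subtractf sum_distrib_right
      by (intro arg_cong2[where f = "(-)"] sum.cong refl) auto
    also have "(\<Sum>k\<le>n. \<Sum>i=1..n. if k = n - i then a i * y k else 0) = (\<Sum>i=1..n. \<Sum>k\<le>n. if k = n - i then a i * y k else 0)"
      by (rule sum.swap)
    also have "\<dots> = (\<Sum>i=1..n. a i * y (n - i))"
      by (intro sum.cong refl) (simp add: sum.delta)
    finally show ?thesis by (simp add: sum.delta)
  qed
  have degQ: "degree Q \<le> n" unfolding Q_def
    by (auto intro!: degree_diff_le degree_sum_le order.trans[OF degree_monom_le])
  have coeffQn: "coeff Q n = 1" using n_pos by (auto simp: coeffQ intro!: sum.neutral)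
  have Qnz: "Q \<noteq> 0" using coeffQn by auto
  have recQ: "(\<Sum>k\<le>n. coeff Q k * x (t + k)) = 0" for t
  proof -
    have "(\<Sum>i=1..n. a i * x (t + (n - i))) = (\<Sum>i=1..n. a i * x (t + n - i))"
      by (intro sum.cong refl) auto
    then show ?thesis using sumQ[of "\<lambda>k. x (t + k)"] recur by simp
  qed
  define G where "G m = (\<Sum>k\<le>n. coeff Q k * (if m < k then x (k - m - 1) else 0))" for m
  define b where "b j = G (n - 1 - j)" for j
  define P where "P = (\<Sum>j<n. monom (b j) (n - 1 - j))"
  have coeffP: "coeff P m = (if m < n then G m else 0)" for m
  proof -
    have "coeff P m = (\<Sum>j<n. if n - 1 - j = m then b j else 0)"
      by (simp add: P_def coeff_sum coeff_monom)
    also have "\<dots> = (\<Sum>j<n. if j = n - 1 - m \<and> m < n then b j else 0)"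
      by (rule sum.cong) auto
    also have "\<dots> = (if m < n then G m else 0)"
      by (cases "m < n") (auto simp: b_def sum.delta)
    finally show ?thesis .
  qed
  have polyP: "poly P z = (\<Sum>k\<le>n. coeff Q k * (\<Sum>t<k. x t * z ^ (k - t - 1)))" for z
  proof -
    have "poly P z = (\<Sum>j<n. b j * z ^ (n - 1 - j))" by (simp add: P_def poly_sum poly_monom)
    also have "\<dots> = (\<Sum>m<n. G m * z ^ m)"
      using sum.nat_diff_reindex[of "\<lambda>m. G m * z^m" n] by (simp add: b_def)
    also have "\<dots> = (\<Sum>m<n. \<Sum>k\<le>n. coeff Q k * (if m < k then x (k-m-1) * z^m else 0))"
      unfolding G_def sum_distrib_right by (intro sum.cong refl) auto
    also have "\<dots> = (\<Sum>k\<le>n. \<Sum>m<n. coeff Q k * (if m < k then x (k-m-1) * z^m else 0))"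
      by (rule sum.swap)
    also have "\<dots> = (\<Sum>k\<le>n. coeff Q k * (\<Sum>t<k. x t * z ^ (k - t - 1)))"
    proof (intro sum.cong refl)
      fix k assume k: "k \<in> {..n}"
      have "(\<Sum>m<n. if m < k then x (k-m-1) * z^m else 0) = (\<Sum>m\<in>{..<n} \<inter> {..<k}. x (k-m-1) * z^m)"
        by (subst sum.inter_restrict) auto
      also have "{..<n} \<inter> {..<k} = {..<k}" using k by auto
      also have "(\<Sum>m<k. x (k-m-1) * z^m) = (\<Sum>t<k. x t * z ^ (k - t - 1))"
      proof -
        have "(\<Sum>t<k. x t * z ^ (k - t - 1)) = (\<Sum>i<k. x (k - Suc i) * z ^ (k - (k - Suc i) - 1))"
          using sum.nat_diff_reindex[of "\<lambda>t. x t * z ^ (k - t - 1)" k] by simp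
        also have "\<dots> = (\<Sum>m<k. x (k-m-1) * z^m)"
          by (intro sum.cong refl) auto
        finally show ?thesis by simp
      qed
      finally have inner: "(\<Sum>m<n. if m < k then x (k-m-1) * z^m else 0) = (\<Sum>t<k. x t * z ^ (k - t - 1))" .
      have "(\<Sum>m<n. coeff Q k * (if m < k then x (k-m-1) * z^m else 0)) = coeff Q k * (\<Sum>m<n. if m < k then x (k-m-1) * z^m else 0)"
        by (simp add: sum_distrib_left)
      then show "(\<Sum>m<n. coeff Q k * (if m < k then x (k-m-1) * z^m else 0)) = coeff Q k * (\<Sum>t<k. x t * z ^ (k - t - 1))"
        unfolding inner .
    qed
    finally show ?thesis .
  qed
  have QpX: "Q * pX = P * qX"
    by (rule analytic_identity[OF degQ recQ X_expansion qX_nz polyP])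
  have QXP: "rf_of_poly Q * X = rf_of_poly P"
    unfolding X_def rf_of_poly_def using qX_nz QpX by (simp add: eq_fract)
  define S where "S = Sx x"
  have psiP: "psi P = psi Q * S"
  proof (rule fls_eqI)
    fix i
    have R: "fls_nth (psi Q * S) i = (\<Sum>k\<le>n. coeff Q k * fls_nth S (i + int k))"
      by (rule psi_S_nth[OF degQ])
    show "fls_nth (psi P) i = fls_nth (psi Q * S) i"
    proof (cases "i \<ge> 1")
      case True
      define t where "t = nat (i - 1)"
      have i: "i = int t + 1" using True t_def by simp
      have "(\<Sum>k\<le>n. coeff Q k * fls_nth S (i + int k)) = (\<Sum>k\<le>n. coeff Q k * x (t + k))"
        unfolding S_def Sx_nth i by (intro sum.cong refl) (auto simp: nat_add_distrib)
      then have "fls_nth (psi Q * S) i = (\<Sum>k\<le>n. coeff Q k * x (t + k))" using R by simp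
      then show ?thesis using recQ[of t] True by (simp add: psi_nth)
    next
      case False
      define m where "m = nat (-i)"
      have i: "i = - int m" using False m_def by simp
      have "(\<Sum>k\<le>n. coeff Q k * fls_nth S (i + int k)) = G m"
        unfolding S_def Sx_nth i G_def by (intro sum.cong refl) (auto simp: nat_diff_distrib)
      then have "fls_nth (psi Q * S) i = G m" using R by simp
      moreover have "G m = 0" if "m \<ge> n"
        unfolding G_def using that by (intro sum.neutral) auto
      ultimately show ?thesis using False by (auto simp: psi_nth coeffP m_def)
    qed
  qed
  have psiQnz: "psi Q \<noteq> 0" using Qnz psi_eq_0_iff by blast
  have RQ: "rf_of_poly Q = rf_z_pow n - (\<Sum>i=1..n. rf_const (a i) * rf_z_pow (n - i))"
    unfolding Q_def by (simp add: rf_of_poly_diff rf_of_poly_sum rf_of_poly_monom rf_const_1)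
  have RP: "rf_of_poly P = (\<Sum>j<n. rf_const (b j) * rf_z_pow (n - 1 - j))"
    by (simp add: P_def rf_of_poly_sum rf_of_poly_monom)
  have REL: "rf_z_pow n * X = (\<Sum>i=1..n. rf_const (a i) * (rf_z_pow (n - i) * X)) + (\<Sum>j<n. rf_const (b j) * rf_z_pow (n - 1 - j))"
  proof -
    have "rf_z_pow n * X - (\<Sum>i=1..n. rf_const (a i) * (rf_z_pow (n - i) * X)) = (\<Sum>j<n. rf_const (b j) * rf_z_pow (n - 1 - j))"
      using QXP unfolding RQ RP by (simp add: left_diff_distrib sum_distrib_right mult.assoc)
    then show ?thesis by (simp add: algebra_simps)
  qed
  have DREL: "rf_deriv_n \<chi> (rf_z_pow n * X) = (\<Sum>i=1..n. rf_const (a i) * rf_deriv_n \<chi> (rf_z_pow (n - i) * X))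
      + (\<Sum>j<n. rf_const (b j) * rf_deriv_n \<chi> (rf_z_pow (n - 1 - j)))" for \<chi>
    by (subst REL) (simp add: rf_deriv_n_add rf_deriv_n_sum rf_deriv_n_cmult)
  have NCR: "\<forall>k\<in>{1..2*n}. r k = 0" if rel: "(\<Sum>k\<in>{1..2*n}. rf_const (r k) * F k) = 0" for r
  proof -
    define C where "C = (\<Sum>k\<in>{1..n}. monom (r k) (n - k))"
    define Dp where "Dp = (\<Sum>j<n. monom (r (j + Suc n)) (n - 1 - j))"
    have "(\<Sum>k\<in>{1..2*n}. rf_const (r k) * F k) =
        (\<Sum>i\<in>{1..n}. rf_const (r i) * F i) + (\<Sum>j<n. rf_const (r (j + Suc n)) * F (j + Suc n))"
      by (rule sum_split_2n)
    also have "(\<Sum>i\<in>{1..n}. rf_const (r i) * F i) = rf_of_poly C * X"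
      unfolding C_def rf_of_poly_sum sum_distrib_right
      by (intro sum.cong refl) (auto simp: F_def rf_of_poly_monom mult.assoc)
    also have "(\<Sum>j<n. rf_const (r (j + Suc n)) * F (j + Suc n)) = rf_of_poly Dp"
      unfolding Dp_def rf_of_poly_sum
      by (intro sum.cong refl) (auto simp: F_def rf_of_poly_monom)
    finally have rel2: "rf_of_poly C * X + rf_of_poly Dp = 0" using rel by simp
    have "rf_of_poly (C * P + Dp * Q) = rf_of_poly Q * (rf_of_poly C * X + rf_of_poly Dp)"
      unfolding rf_of_poly_add rf_of_poly_mult QXP[symmetric] by (simp add: algebra_simps)
    then have CPDQ: "C * P + Dp * Q = 0" using rel2 rf_of_poly_eq_0_iff by simp
    then have "psi C * psi P + psi Dp * psi Q = 0" using psi_add psi_mult psi_eq_0_iff by metis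
    then have "psi Q * (psi C * S + psi Dp) = 0" unfolding psiP by (simp add: algebra_simps)
    then have CS: "psi C * S = - psi Dp" using psiQnz by (simp add: eq_neg_iff_add_eq_0)
    have degC: "degree C \<le> n - 1" unfolding C_def
      by (auto intro!: degree_sum_le order.trans[OF degree_monom_le])
    have degDp: "degree Dp \<le> n - 1" unfolding Dp_def
      by (auto intro!: degree_sum_le order.trans[OF degree_monom_le])
    have Erec: "(\<Sum>k\<le>n-1. coeff C k * x (t + k)) = 0" for t
    proof -
      have "fls_nth (psi C * S) (int t + 1) = (\<Sum>k\<le>n-1. coeff C k * fls_nth S (int t + 1 + int k))"
        by (rule psi_S_nth[OF degC])
      also have "\<dots> = (\<Sum>k\<le>n-1. coeff C k * x (t + k))"
        unfolding S_def Sx_nth by (intro sum.cong refl) (auto simp: nat_add_distrib)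
      finally show ?thesis using CS by (simp add: psi_nth)
    qed
    have coeffC: "coeff C m = r (n - m)" if "m < n" for m
    proof -
      have "coeff C m = (\<Sum>k\<in>{1..n}. if n - k = m then r k else 0)"
        by (simp add: C_def coeff_sum coeff_monom)
      also have "\<dots> = (\<Sum>k\<in>{1..n}. if k = n - m then r k else 0)"
        using that by (intro sum.cong refl) auto
      also have "\<dots> = r (n - m)" using that by (simp add: sum.delta)
      finally show ?thesis .
    qed
    have coeffDp: "coeff Dp m = r (2*n - m)" if "m < n" for m
    proof -
      have "coeff Dp m = (\<Sum>j<n. if n - 1 - j = m then r (j + Suc n) else 0)"
        by (simp add: Dp_def coeff_sum coeff_monom cong: if_cong)
      also have "\<dots> = (\<Sum>j<n. if j = n - 1 - m then r (j + Suc n) else 0)"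
        using that by (intro sum.cong refl) auto
      also have "\<dots> = r (n - 1 - m + Suc n)" using that by (simp add: sum.delta)
      also have "n - 1 - m + Suc n = 2*n - m" using that by simp
      finally show ?thesis .
    qed
    show ?thesis
    proof (cases "C = 0")
      case True
      then have "Dp * Q = 0" using CPDQ by simp
      then have Dp0: "Dp = 0" using Qnz by simp
      show ?thesis
      proof
        fix k assume k: "k \<in> {1..2*n}"
        show "r k = 0"
        proof (cases "k \<le> n")
          case True
          then have "r k = coeff C (n - k)" using k coeffC[of "n - k"] by auto
          then show ?thesis using \<open>C = 0\<close> by simp
        next
          case False
          then have "r k = coeff Dp (2*n - k)" using k coeffDp[of "2*n - k"] by auto
          then show ?thesis using Dp0 by simp
        qed
      qed
    next
      case False
      define d where "d = degree C"
      define L where "L = coeff C d"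
      have L0: "L \<noteq> 0" using False unfolding L_def d_def by simp
      have dn: "d < n" using degC n_pos unfolding d_def by linarith
      define c where "c i = - coeff C (d - i) / L" for i
      have "\<forall>t. x (t + d) = (\<Sum>i = 1..d. c i * x (t + d - i))"
      proof
        fix t
        have "(\<Sum>k\<le>n-1. coeff C k * x (t + k)) = (\<Sum>k\<le>d. coeff C k * x (t + k))"
          by (rule sum.mono_neutral_right) (use degC in \<open>auto simp: d_def coeff_eq_0\<close>)
        also have "\<dots> = (\<Sum>k<d. coeff C k * x (t + k)) + L * x (t + d)"
          by (simp add: lessThan_Suc_atMost[symmetric] L_def)
        finally have e: "(\<Sum>k<d. coeff C k * x (t + k)) + L * x (t + d) = 0" using Erec[of t] by simp
        have "(\<Sum>i = 1..d. c i * x (t + d - i)) = (\<Sum>k<d. c (Suc k) * x (t + d - Suc k))"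
          using sum.atLeast1_atMost_eq[of "\<lambda>i. c i * x (t + d - i)" d] by simp
        also have "\<dots> = (\<Sum>k<d. - coeff C (d - Suc k) / L * x (t + (d - Suc k)))"
          by (intro sum.cong refl) (auto simp: c_def)
        also have "\<dots> = (\<Sum>k<d. - coeff C k / L * x (t + k))"
          by (rule sum.nat_diff_reindex)
        also have "\<dots> = - (\<Sum>k<d. coeff C k * x (t + k)) / L"
          by (simp add: sum_divide_distrib sum_negf)
        also have "\<dots> = x (t + d)" using e L0 by (simp add: field_simps)
        finally show "x (t + d) = (\<Sum>i = 1..d. c i * x (t + d - i))" by simp
      qed
      then have False using minimal dn by blast
      then show ?thesis ..
    qed
  qed
  have IND: "\<forall>k\<in>{1..2*n}. \<gamma> k = 0"
    if h: "\<forall>\<chi><2*n. (\<Sum>k\<in>{1..2*n}. \<gamma> k * rf_deriv_n \<chi> (F k)) = 0" for \<gamma>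
  proof (rule ccontr)
    assume "\<not> (\<forall>k\<in>{1..2*n}. \<gamma> k = 0)"
    then have nz: "\<exists>k\<in>{1..2*n}. \<gamma> k \<noteq> 0" by blast
    have h': "\<forall>\<chi> < card {1..2*n}. (\<Sum>i\<in>{1..2*n}. \<gamma> i * (rf_deriv^^\<chi>) (F i)) = 0"
      using h by (simp add: rf_deriv_n_def)
    obtain c where c: "\<forall>i\<in>{1..2*n}. rf_deriv (c i) = 0" "\<exists>i\<in>{1..2*n}. c i \<noteq> 0"
        "(\<Sum>i\<in>{1..2*n}. c i * F i) = 0"
      using wronski[OF rf_deriv_add rf_deriv_mult, of "{1..2*n}" \<gamma> F] h' nz by blast
    define r where "r i = (SOME s. c i = rf_const s)" for i
    have cr: "c i = rf_const (r i)" if "i \<in> {1..2*n}" for i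
    proof -
      have "\<exists>s. c i = rf_const s" using rf_deriv_zero_const c(1) that by blast
      then show ?thesis unfolding r_def by (rule someI_ex)
    qed
    have "(\<Sum>i\<in>{1..2*n}. rf_const (r i) * F i) = (\<Sum>i\<in>{1..2*n}. c i * F i)"
      by (intro sum.cong refl) (simp add: cr)
    then have "(\<Sum>i\<in>{1..2*n}. rf_const (r i) * F i) = 0" using c(3) by simp
    then have r0: "\<forall>k\<in>{1..2*n}. r k = 0" by (rule NCR)
    from c(2) obtain i where i: "i \<in> {1..2*n}" "c i \<noteq> 0" by blast
    then show False using cr[OF i(1)] r0 by (simp add: rf_const_0)
  qed
  have part3: "\<forall>(\<alpha> :: nat \<Rightarrow> real poly fract) (\<beta> :: nat \<Rightarrow> real poly fract).
              (\<forall>\<chi> \<le> 2 * n.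
                 rf_deriv_n \<chi> (rf_z_pow n * X)
                 = (\<Sum>i = 1..n. \<alpha> i * rf_deriv_n \<chi> (rf_z_pow (n - i) * X))
                   + (\<Sum>j < n. \<beta> j * rf_deriv_n \<chi> (rf_z_pow (n - 1 - j))))
              \<longleftrightarrow> ((\<forall>i \<in> {1..n}. \<alpha> i = rf_const (a i)) \<and> (\<forall>j < n. \<beta> j = rf_const (b j)))"
  proof (intro allI)
    fix \<alpha> \<beta> :: "nat \<Rightarrow> real poly fract"
    show "(\<forall>\<chi> \<le> 2 * n.
                 rf_deriv_n \<chi> (rf_z_pow n * X)
                 = (\<Sum>i = 1..n. \<alpha> i * rf_deriv_n \<chi> (rf_z_pow (n - i) * X))
                   + (\<Sum>j < n. \<beta> j * rf_deriv_n \<chi> (rf_z_pow (n - 1 - j))))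
              \<longleftrightarrow> ((\<forall>i \<in> {1..n}. \<alpha> i = rf_const (a i)) \<and> (\<forall>j < n. \<beta> j = rf_const (b j)))"
    proof
      assume eqs: "\<forall>\<chi> \<le> 2 * n.
                 rf_deriv_n \<chi> (rf_z_pow n * X)
                 = (\<Sum>i = 1..n. \<alpha> i * rf_deriv_n \<chi> (rf_z_pow (n - i) * X))
                   + (\<Sum>j < n. \<beta> j * rf_deriv_n \<chi> (rf_z_pow (n - 1 - j)))"
      define \<gamma> where "\<gamma> k = (if k \<le> n then \<alpha> k - rf_const (a k) else \<beta> (k - Suc n) - rf_const (b (k - Suc n)))" for k
      have "\<forall>\<chi><2*n. (\<Sum>k\<in>{1..2*n}. \<gamma> k * rf_deriv_n \<chi> (F k)) = 0"
      proof (intro allI impI)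
        fix \<chi> :: nat assume "\<chi> < 2*n"
        then have e: "rf_deriv_n \<chi> (rf_z_pow n * X)
                 = (\<Sum>i = 1..n. \<alpha> i * rf_deriv_n \<chi> (rf_z_pow (n - i) * X))
                   + (\<Sum>j < n. \<beta> j * rf_deriv_n \<chi> (rf_z_pow (n - 1 - j)))" using eqs by simp
        have "(\<Sum>k\<in>{1..2*n}. \<gamma> k * rf_deriv_n \<chi> (F k)) =
            (\<Sum>i\<in>{1..n}. \<gamma> i * rf_deriv_n \<chi> (F i)) + (\<Sum>j<n. \<gamma> (j + Suc n) * rf_deriv_n \<chi> (F (j + Suc n)))"
          by (rule sum_split_2n)
        also have "(\<Sum>i\<in>{1..n}. \<gamma> i * rf_deriv_n \<chi> (F i)) =
            (\<Sum>i\<in>{1..n}. \<alpha> i * rf_deriv_n \<chi> (rf_z_pow (n - i) * X)) - (\<Sum>i\<in>{1..n}. rf_const (a i) * rf_deriv_n \<chi> (rf_z_pow (n - i) * X))"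
          unfolding sum_subtractf[symmetric] by (intro sum.cong refl) (auto simp: \<gamma>_def F_def algebra_simps)
        also have "(\<Sum>j<n. \<gamma> (j + Suc n) * rf_deriv_n \<chi> (F (j + Suc n))) =
            (\<Sum>j<n. \<beta> j * rf_deriv_n \<chi> (rf_z_pow (n - 1 - j))) - (\<Sum>j<n. rf_const (b j) * rf_deriv_n \<chi> (rf_z_pow (n - 1 - j)))"
          unfolding sum_subtractf[symmetric] by (intro sum.cong refl) (auto simp: \<gamma>_def F_def algebra_simps)
        finally show "(\<Sum>k\<in>{1..2*n}. \<gamma> k * rf_deriv_n \<chi> (F k)) = 0"
          using e DREL[of \<chi>] by (simp add: algebra_simps)
      qed
      then have g0: "\<forall>k\<in>{1..2*n}. \<gamma> k = 0" by (rule IND)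
      show "(\<forall>i \<in> {1..n}. \<alpha> i = rf_const (a i)) \<and> (\<forall>j < n. \<beta> j = rf_const (b j))"
      proof (intro conjI ballI allI impI)
        fix i assume i: "i \<in> {1..n}"
        then have "i \<in> {1..2*n}" by auto
        then have "\<gamma> i = 0" using g0 by blast
        then show "\<alpha> i = rf_const (a i)" using i by (simp add: \<gamma>_def)
      next
        fix j assume "j < n"
        then have "\<gamma> (j + Suc n) = 0" using g0 by auto
        then show "\<beta> j = rf_const (b j)" by (simp add: \<gamma>_def)
      qed
    next
      assume h: "(\<forall>i \<in> {1..n}. \<alpha> i = rf_const (a i)) \<and> (\<forall>j < n. \<beta> j = rf_const (b j))"
      show "\<forall>\<chi> \<le> 2 * n.
                 rf_deriv_n \<chi> (rf_z_pow n * X)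
                 = (\<Sum>i = 1..n. \<alpha> i * rf_deriv_n \<chi> (rf_z_pow (n - i) * X))
                   + (\<Sum>j < n. \<beta> j * rf_deriv_n \<chi> (rf_z_pow (n - 1 - j)))"
      proof (intro allI impI)
        fix \<chi> :: nat
        have "(\<Sum>i = 1..n. \<alpha> i * rf_deriv_n \<chi> (rf_z_pow (n - i) * X)) = (\<Sum>i = 1..n. rf_const (a i) * rf_deriv_n \<chi> (rf_z_pow (n - i) * X))"
          using h by (intro sum.cong refl) auto
        moreover have "(\<Sum>j < n. \<beta> j * rf_deriv_n \<chi> (rf_z_pow (n - 1 - j))) = (\<Sum>j < n. rf_const (b j) * rf_deriv_n \<chi> (rf_z_pow (n - 1 - j)))"
          using h by (intro sum.cong refl) auto
        ultimately show "rf_deriv_n \<chi> (rf_z_pow n * X)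
                 = (\<Sum>i = 1..n. \<alpha> i * rf_deriv_n \<chi> (rf_z_pow (n - i) * X))
                   + (\<Sum>j < n. \<beta> j * rf_deriv_n \<chi> (rf_z_pow (n - 1 - j)))" using DREL[of \<chi>] by simp
      qed
    qed
  qed
  have part2: "vec_space.rank (2 * n + 1) M = 2 * n"
  proof -
    interpret vec_space "TYPE(real poly fract)" "2*n+1" .
    have Mc: "M \<in> carrier_mat (2*n+1) (2*n+1)" unfolding M_def by simp
    have Mij: "M $$ (i, k) = rf_deriv_n i (F k)" if "i < 2*n+1" "k < 2*n+1" for i k
      using that unfolding M_def F_def by simp
    define N where "N = mat (2*n+1) (2*n) (\<lambda>(\<chi>, k). rf_deriv_n \<chi> (F (k+1)))"
    have Nc: "N \<in> carrier_mat (2*n+1) (2*n)" unfolding N_def by simp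
    have Nij: "N $$ (i, k) = rf_deriv_n i (F (k+1))" if "i < 2*n+1" "k < 2*n" for i k
      using that unfolding N_def by simp
    have colN: "col N k = col M (k+1)" if "k < 2*n" for k
    proof (rule eq_vecI)
      show "dim_vec (col N k) = dim_vec (col M (k+1))" using Nc Mc by simp
      fix i assume "i < dim_vec (col M (k+1))"
      then have i: "i < 2*n+1" using Mc by simp
      show "col N k $ i = col M (k+1) $ i" using i that Nc Mc Nij Mij by simp
    qed
    have NvF: "(N *\<^sub>v v) $ \<chi> = (\<Sum>k\<in>{1..2*n}. v $ (k - 1) * rf_deriv_n \<chi> (F k))"
      if v: "v \<in> carrier_vec (2*n)" and \<chi>: "\<chi> < 2*n+1" for v \<chi>
    proof -
      have "(N *\<^sub>v v) $ \<chi> = (\<Sum>i\<in>{0..<2*n}. row N \<chi> $ i * v $ i)"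
        using Nc v \<chi> by (simp add: scalar_prod_def)
      also have "\<dots> = (\<Sum>i<2*n. v $ i * rf_deriv_n \<chi> (F (i+1)))"
        using Nc \<chi> Nij by (auto simp: atLeast0LessThan intro!: sum.cong)
      also have "\<dots> = (\<Sum>k\<in>{1..2*n}. v $ (k - 1) * rf_deriv_n \<chi> (F (k - 1 + 1)))"
        by (rule sum_shift_1)
      also have "\<dots> = (\<Sum>k\<in>{1..2*n}. v $ (k - 1) * rf_deriv_n \<chi> (F k))"
        by (intro sum.cong refl) auto
      finally show ?thesis .
    qed
    have NZ: "v = 0\<^sub>v (2*n)" if v: "v \<in> carrier_vec (2*n)" and Nv: "N *\<^sub>v v = 0\<^sub>v (2*n+1)" for v
    proof -
      have "\<forall>\<chi><2*n. (\<Sum>k\<in>{1..2*n}. v $ (k - 1) * rf_deriv_n \<chi> (F k)) = 0"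
      proof (intro allI impI)
        fix \<chi> :: nat assume "\<chi> < 2*n"
        then have "(N *\<^sub>v v) $ \<chi> = 0" using Nv by simp
        then show "(\<Sum>k\<in>{1..2*n}. v $ (k - 1) * rf_deriv_n \<chi> (F k)) = 0"
          using NvF[OF v, of \<chi>] \<open>\<chi> < 2*n\<close> by simp
      qed
      then have z: "\<forall>k\<in>{1..2*n}. v $ (k - 1) = 0" by (rule IND)
      show ?thesis
      proof (rule eq_vecI)
        fix i assume "i < dim_vec (0\<^sub>v (2*n) :: real poly fract vec)"
        then have "i < 2*n" by simp
        then have "Suc i \<in> {1..2*n}" by simp
        then show "v $ i = 0\<^sub>v (2*n) $ i" using z \<open>i < 2*n\<close> by force
      qed (use v in simp)
    qed
    have dist: "distinct (cols N)"
    proof (rule ccontr)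
      assume "\<not> distinct (cols N)"
      then obtain i j where ij: "i \<noteq> j" "i < 2*n" "j < 2*n" "cols N ! i = cols N ! j"
        using Nc by (auto simp: distinct_conv_nth)
      have cij: "col N i = col N j" using ij Nc by simp
      define v :: "real poly fract vec" where "v = vec (2*n) (\<lambda>k. if k = i then 1 else if k = j then -1 else 0)"
      have vc: "v \<in> carrier_vec (2*n)" unfolding v_def by simp
      have "N *\<^sub>v v = 0\<^sub>v (2*n+1)"
      proof (rule eq_vecI)
        fix \<chi> assume "\<chi> < dim_vec (0\<^sub>v (2*n+1) :: real poly fract vec)"
        then have \<chi>: "\<chi> < 2*n+1" by simp
        have "(N *\<^sub>v v) $ \<chi> = (\<Sum>k\<in>{0..<2*n}. N $$ (\<chi>, k) * v $ k)"
          using Nc vc \<chi> by (simp add: scalar_prod_def)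
        also have "\<dots> = (\<Sum>k\<in>{0..<2*n}. (if k = i then N $$ (\<chi>, k) else 0) - (if k = j then N $$ (\<chi>, k) else 0))"
          using ij(1) by (intro sum.cong refl) (auto simp: v_def)
        also have "\<dots> = N $$ (\<chi>, i) - N $$ (\<chi>, j)"
          using ij by (simp add: sum_subtractf sum.delta)
        also have "\<dots> = col N i $ \<chi> - col N j $ \<chi>" using Nc \<chi> ij(2,3) by simp
        also have "\<dots> = 0" using cij by simp
        finally show "(N *\<^sub>v v) $ \<chi> = 0\<^sub>v (2*n+1) $ \<chi>" using \<chi> by simp
      qed (use Nc in simp)
      then have "v = 0\<^sub>v (2*n)" using NZ vc by blast
      moreover have "v $ i = 1" using ij unfolding v_def by simp
      ultimately show False using ij by simp
    qed
    have li: "lin_indpt (set (cols N))"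
    proof (rule ccontr)
      assume "\<not> lin_indpt (set (cols N))"
      then obtain v where "v \<in> carrier_vec (2*n)" "v \<noteq> 0\<^sub>v (2*n)" "N *\<^sub>v v = 0\<^sub>v (2*n+1)"
        using lin_depE[OF Nc _ dist] by blast
      then show False using NZ by blast
    qed
    have sub: "set (cols N) \<subseteq> set (cols M)"
    proof
      fix y assume "y \<in> set (cols N)"
      then obtain k where k: "k < 2*n" "y = cols N ! k" using Nc by (auto simp: in_set_conv_nth)
      then have "y = col M (k+1)" using colN Nc by simp
      also have "\<dots> = cols M ! (k+1)" using Mc k by simp
      finally have y: "y = cols M ! (k+1)" .
      have "k+1 < length (cols M)" using Mc k by simp
      then show "y \<in> set (cols M)" unfolding y by (rule nth_mem)
    qed
    have cardN: "card (set (cols N)) = 2*n" using distinct_card[OF dist] Nc by simp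
    have ge: "rank M \<ge> 2*n" using rank_ge_card_indpt[OF Mc sub li] cardN by simp
    define w :: "real poly fract vec" where "w = vec (2*n+1) (\<lambda>k. if k = 0 then 1 else
         - (if k \<le> n then rf_const (a k) else rf_const (b (k - Suc n))))"
    have wc: "w \<in> carrier_vec (2*n+1)" unfolding w_def by simp
    have Mw: "M *\<^sub>v w = 0\<^sub>v (2*n+1)"
    proof (rule eq_vecI)
      fix \<chi> assume "\<chi> < dim_vec (0\<^sub>v (2*n+1) :: real poly fract vec)"
      then have \<chi>: "\<chi> < 2*n+1" by simp
      define g where "g k = M $$ (\<chi>, k) * w $ k" for k
      have "(M *\<^sub>v w) $ \<chi> = (\<Sum>k\<in>{0..<2*n+1}. g k)"
        using Mc wc \<chi> by (simp add: scalar_prod_def g_def)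
      also have "\<dots> = g 0 + (\<Sum>k<2*n. g (Suc k))"
      proof -
        have "{0..<2*n+1} = {..<Suc (2*n)}" by auto
        then show ?thesis by (simp only: sum.lessThan_Suc_shift)
      qed
      also have "(\<Sum>k<2*n. g (Suc k)) = (\<Sum>k\<in>{1..2*n}. g k)"
        using sum.atLeast1_atMost_eq[of g "2*n"] by simp
      also have "\<dots> = (\<Sum>i\<in>{1..n}. g i) + (\<Sum>j<n. g (j + Suc n))" by (rule sum_split_2n)
      also have "(\<Sum>i\<in>{1..n}. g i) = - (\<Sum>i=1..n. rf_const (a i) * rf_deriv_n \<chi> (rf_z_pow (n - i) * X))"
        unfolding sum_negf[symmetric] using \<chi> by (intro sum.cong refl) (auto simp: g_def w_def Mij F_def)
      also have "(\<Sum>j<n. g (j + Suc n)) = - (\<Sum>j<n. rf_const (b j) * rf_deriv_n \<chi> (rf_z_pow (n - 1 - j)))"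
        unfolding sum_negf[symmetric] using \<chi> by (intro sum.cong refl) (auto simp: g_def w_def Mij F_def)
      also have "g 0 = rf_deriv_n \<chi> (rf_z_pow n * X)" using \<chi> by (simp add: g_def w_def Mij F_def)
      finally show "(M *\<^sub>v w) $ \<chi> = 0\<^sub>v (2*n+1) $ \<chi>" using DREL[of \<chi>] \<chi> by simp
    qed (use Mc in simp)
    have "w \<noteq> 0\<^sub>v (2*n+1)"
    proof
      assume "w = 0\<^sub>v (2*n+1)"
      then have "w $ 0 = 0" by simp
      then show False unfolding w_def by simp
    qed
    then have "det M = 0" using det_0_iff_vec_prod_zero_field[OF Mc] wc Mw by blast
    then have "rank M \<noteq> 2*n+1" using det_rank_iff[OF Mc] by simp
    moreover have "rank M \<le> 2*n+1" by (rule rank_le_nc[OF Mc])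
    ultimately show ?thesis using ge by simp
  qed
  show ?thesis using QXP part2 part3 unfolding P_def by blast
qed

end
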